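(* Let $M(C,\bar\xi,\pi)$ be a Myller configuration with Darboux frame $(\bar\xi,\bar\mu,\bar v)$ and invariants $G,K,T$, with $(G,T)\neq(0,0)$ everywhere. Then: (i) if $K\equiv0$, $C$ is a $\bar\mu$-helix iff $\sigma_\mu=\mp\dfrac{T'G-TG'}{(G^2+T^2)^{3/2}}$ is constant; (ii) if $G\equiv0$, $C$ is a $\bar\mu$-helix iff $\sigma_\mu=\pm K/T$ is constant; (iii) if $T\equiv0$, $C$ is a $\bar\mu$-helix iff $\sigma_\mu=\pm K/G$ is constant.
   Context: Let $C$ be a smooth curve in $E^3$ parametrized by arclength $s$; primes denote $d/ds$. A Myller configuration $M(C,\bar\xi,\pi)$ consists of a smooth unit vector field $\bar\xi$ along $C$ and a smooth oriented plane field $\pi$ with $\bar\xi\in\pi$; $\bar v$ is the unit normal of $\pi$, $\bar\mu=\bar v\times\bar\xi$, and $\bar\xi'=G\bar\mu+K\bar v$, $\bar\mu'=-G\bar\xi+T\bar v$, $\bar v'=-K\bar\xi-T\bar\mu$. $C$ is a $\bar\mu$-helix if $\langle\bar\mu,\bar d_\mu\rangle$ is constant along $C$ for some constant unit vector $\bar d_\mu$. *)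

theory Defs
  imports "HOL-Analysis.Analysis" "HOL-Analysis.Cross3"
begin

definition iter_vderiv :: "nat \<Rightarrow> (real \<Rightarrow> 'a::real_normed_vector) \<Rightarrow> real \<Rightarrow> 'a" where
  "iter_vderiv k f = ((\<lambda>g s. vector_derivative g (at s)) ^^ k) f"

definition smooth_on :: "real set \<Rightarrow> (real \<Rightarrow> 'a::real_normed_vector) \<Rightarrow> bool" where
  "smooth_on I f \<longleftrightarrow> (\<forall>k. \<forall>t\<in>I. iter_vderiv k f differentiable (at t))"

definition myller_config ::
  "real set \<Rightarrow> (real \<Rightarrow> real^3) \<Rightarrow> (real \<Rightarrow> real^3) \<Rightarrow> (real \<Rightarrow> real^3) \<Rightarrow> (real \<Rightarrow> real^3)
   \<Rightarrow> (real \<Rightarrow> real) \<Rightarrow> (real \<Rightarrow> real) \<Rightarrow> (real \<Rightarrow> real) \<Rightarrow> bool" where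
  "myller_config I C xi mu v G K T \<longleftrightarrow>
     is_interval I \<and> open I \<and> I \<noteq> {} \<and>
     smooth_on I C \<and> (\<forall>s\<in>I. norm (vector_derivative C (at s)) = 1) \<and>
     smooth_on I xi \<and> smooth_on I v \<and>
     (\<forall>s\<in>I. norm (xi s) = 1 \<and> norm (v s) = 1 \<and> xi s \<bullet> v s = 0 \<and> mu s = cross3 (v s) (xi s)) \<and>
     smooth_on I G \<and> smooth_on I K \<and> smooth_on I T \<and>
     (\<forall>s\<in>I. (xi has_vector_derivative (G s *\<^sub>R mu s + K s *\<^sub>R v s)) (at s)) \<and>
     (\<forall>s\<in>I. (mu has_vector_derivative (- G s *\<^sub>R xi s + T s *\<^sub>R v s)) (at s)) \<and>
     (\<forall>s\<in>I. (v has_vector_derivative (- K s *\<^sub>R xi s - T s *\<^sub>R mu s)) (at s))"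

definition mu_helix :: "real set \<Rightarrow> (real \<Rightarrow> real^3) \<Rightarrow> bool" where
  "mu_helix I mu \<longleftrightarrow> (\<exists>d::real^3. norm d = 1 \<and> (\<exists>c. \<forall>s\<in>I. mu s \<bullet> d = c))"

definition const_on :: "real set \<Rightarrow> (real \<Rightarrow> real) \<Rightarrow> bool" where
  "const_on I f \<longleftrightarrow> (\<exists>c. \<forall>s\<in>I. f s = c)"

end

theory Submission
  imports Defs
begin


lemma cross_cross_lagr: "cross3 (cross3 x y) z = (x \<bullet> z) *\<^sub>R y - (y \<bullet> z) *\<^sub>R x"
  for x y z :: "real^3"
  by (simp add: cross3_simps forall_3) 

lemma frame_decomp:
  fixes a b d :: "real^3"
  assumes "norm a = 1" "norm b = 1" "a \<bullet> b = 0"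
  shows "d = (d \<bullet> a) *\<^sub>R a + (d \<bullet> b) *\<^sub>R b + (d \<bullet> cross3 b a) *\<^sub>R cross3 b a"
proof -
  have aa: "a \<bullet> a = 1" "b \<bullet> b = 1" using assms by (simp_all add: dot_square_norm)
  have nn: "cross3 b a \<bullet> cross3 b a = 1"
    using norm_cross_dot[of b a] assms by (simp add: dot_square_norm inner_commute)
  let ?n = "cross3 b a"
  have "cross3 ?n (cross3 d ?n) = (?n \<bullet> ?n) *\<^sub>R d - (d \<bullet> ?n) *\<^sub>R ?n"
    by (simp add: cross3_simps forall_3)
  moreover have "cross3 d ?n = (d \<bullet> a) *\<^sub>R b - (d \<bullet> b) *\<^sub>R a"
    by (simp add: cross3_simps forall_3)
  moreover have "cross3 ?n b = (b \<bullet> b) *\<^sub>R a - (a \<bullet> b) *\<^sub>R b"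
    by (simp add: cross3_simps forall_3)
  moreover have "cross3 ?n a = (b \<bullet> a) *\<^sub>R a - (a \<bullet> a) *\<^sub>R b"
    by (simp add: cross3_simps forall_3)
  ultimately have "d - (d \<bullet> ?n) *\<^sub>R ?n = (d \<bullet> a) *\<^sub>R a + (d \<bullet> b) *\<^sub>R b"
    using aa nn assms(3) by (simp add: cross_mult_right Cross3.right_diff_distrib inner_commute)
  then show ?thesis by (simp add: algebra_simps)
qed

lemma parseval:
  fixes a b d :: "real^3"
  assumes "norm a = 1" "norm b = 1" "a \<bullet> b = 0"
  shows "(d \<bullet> a)^2 + (d \<bullet> b)^2 + (d \<bullet> cross3 b a)^2 = norm d ^ 2"
proof -
  have aa: "a \<bullet> a = 1" "b \<bullet> b = 1" using assms by (simp_all add: dot_square_norm)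
  have nn: "cross3 b a \<bullet> cross3 b a = 1"
    using norm_cross_dot[of b a] assms by (simp add: dot_square_norm inner_commute)
  have o: "a \<bullet> cross3 b a = 0" "b \<bullet> cross3 b a = 0" by (simp_all add: dot_cross_self)
  have "norm d ^ 2 = d \<bullet> d" by (simp add: dot_square_norm)
  also have "\<dots> = d \<bullet> ((d \<bullet> a) *\<^sub>R a + (d \<bullet> b) *\<^sub>R b + (d \<bullet> cross3 b a) *\<^sub>R cross3 b a)"
    using frame_decomp[OF assms, of d] by simp
  also have "\<dots> = (d \<bullet> a)^2 + (d \<bullet> b)^2 + (d \<bullet> cross3 b a)^2"
    by (simp add: inner_add_right power2_eq_square)
  finally show ?thesis by simp
qed

lemma const_real:
  fixes f :: "real \<Rightarrow> real"
  assumes "is_interval I" "open I" "\<And>s. s \<in> I \<Longrightarrow> (f has_real_derivative 0) (at s)"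
  shows "\<exists>c. \<forall>s\<in>I. f s = c"
  using has_field_derivative_0_imp_constant_on[of I f] assms is_interval_connected
  by (metis constant_on_def)

lemma const_vec:
  fixes f :: "real \<Rightarrow> real^3"
  assumes "is_interval I" "open I" "\<And>s. s \<in> I \<Longrightarrow> (f has_vector_derivative 0) (at s)"
  shows "\<exists>c. \<forall>s\<in>I. f s = c"
proof -
  have "continuous_on I f"
    by (rule continuous_on_vector_derivative) (use assms(3) has_vector_derivative_at_within in blast)
  moreover have "\<forall>x\<in>I-{}. (f has_derivative (\<lambda>h. 0)) (at x within I)"
    using assms(3) by (auto simp: has_vector_derivative_def intro: has_derivative_at_withinI)
  ultimately have "f constant_on I"
    using has_derivative_zero_connected_constant_on[of I "{}" f] assms is_interval_connected by auto
  then show ?thesis by (metis constant_on_def)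
qed

lemma inner_deriv:
  fixes f :: "real \<Rightarrow> real^3"
  assumes "(f has_vector_derivative f') (at s)"
  shows "((\<lambda>s. f s \<bullet> d) has_real_derivative (f' \<bullet> d)) (at s)"
  using bounded_linear.has_vector_derivative[OF bounded_linear_inner_left assms, of d]
  by (simp add: has_real_derivative_iff_has_vector_derivative)

lemma deriv_const_zero:
  fixes f :: "real \<Rightarrow> real"
  assumes "open I" "s \<in> I" "\<forall>t\<in>I. f t = c" "(f has_real_derivative a) (at s)"
  shows "a = 0"
proof -
  have "((\<lambda>_. c) has_real_derivative a) (at s)"
    using has_field_derivative_transform_within_open[OF assms(4) assms(1,2)] assms(3) by auto
  then show ?thesis using DERIV_const DERIV_unique by blast
qed

lemma powr32: "(x::real) > 0 \<Longrightarrow> x powr (3/2) = sqrt x ^ 3"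
proof -
  assume "x > 0"
  have "x powr (3/2) = x powr (1 + 1/2)" by simp
  also have "\<dots> = x powr 1 * x powr (1/2)" by (rule powr_add)
  also have "\<dots> = x * sqrt x" using \<open>x > 0\<close> by (simp add: powr_half_sqrt)
  also have "\<dots> = sqrt x ^ 3" using \<open>x > 0\<close>
    by (simp add: power3_eq_cube)
  finally show ?thesis .
qed


locale frame =
  fixes I :: "real set" and xi mu v :: "real \<Rightarrow> real^3" and G K T :: "real \<Rightarrow> real"
  assumes Iint: "is_interval I" and Iopen: "open I" and Ine: "I \<noteq> {}"
    and uxi: "\<And>s. s \<in> I \<Longrightarrow> norm (xi s) = 1"
    and uv: "\<And>s. s \<in> I \<Longrightarrow> norm (v s) = 1"
    and oxv: "\<And>s. s \<in> I \<Longrightarrow> xi s \<bullet> v s = 0"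
    and mudef: "\<And>s. s \<in> I \<Longrightarrow> mu s = cross3 (v s) (xi s)"
    and dxi: "\<And>s. s \<in> I \<Longrightarrow> (xi has_vector_derivative (G s *\<^sub>R mu s + K s *\<^sub>R v s)) (at s)"
    and dmu: "\<And>s. s \<in> I \<Longrightarrow> (mu has_vector_derivative (- G s *\<^sub>R xi s + T s *\<^sub>R v s)) (at s)"
    and dv: "\<And>s. s \<in> I \<Longrightarrow> (v has_vector_derivative (- K s *\<^sub>R xi s - T s *\<^sub>R mu s)) (at s)"
    and dG: "\<And>s. s \<in> I \<Longrightarrow> (G has_real_derivative deriv G s) (at s)"
    and dT: "\<And>s. s \<in> I \<Longrightarrow> (T has_real_derivative deriv T s) (at s)"
    and GT: "\<And>s. s \<in> I \<Longrightarrow> (G s, T s) \<noteq> (0, 0)"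
begin

lemma ip:
  assumes "s \<in> I"
  shows "xi s \<bullet> xi s = 1" "v s \<bullet> v s = 1" "mu s \<bullet> mu s = 1" "xi s \<bullet> v s = 0" "v s \<bullet> xi s = 0"
    "mu s \<bullet> xi s = 0" "mu s \<bullet> v s = 0" "xi s \<bullet> mu s = 0" "v s \<bullet> mu s = 0"
proof -
  have nn: "cross3 (v s) (xi s) \<bullet> cross3 (v s) (xi s) = 1"
    using norm_cross_dot[of "v s" "xi s"] uxi[OF assms] uv[OF assms] oxv[OF assms]
    by (simp add: dot_square_norm inner_commute)
  show "xi s \<bullet> xi s = 1" "v s \<bullet> v s = 1" using uxi[OF assms] uv[OF assms] by (simp_all add: dot_square_norm)
  show "mu s \<bullet> mu s = 1" using nn mudef[OF assms] by simp
  show "xi s \<bullet> v s = 0" "v s \<bullet> xi s = 0" using oxv[OF assms] by (simp_all add: inner_commute)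
  show "mu s \<bullet> xi s = 0" "mu s \<bullet> v s = 0" "xi s \<bullet> mu s = 0" "v s \<bullet> mu s = 0"
    using mudef[OF assms] by (simp_all add: dot_cross_self inner_commute)
qed

lemma pars: "s \<in> I \<Longrightarrow> (d \<bullet> xi s)^2 + (d \<bullet> v s)^2 + (d \<bullet> mu s)^2 = norm d ^ 2"
  using parseval[of "xi s" "v s" d] uxi uv oxv mudef by simp

lemma dx: "s \<in> I \<Longrightarrow> ((\<lambda>s. xi s \<bullet> d) has_real_derivative (G s * (mu s \<bullet> d) + K s * (v s \<bullet> d))) (at s)"
  using inner_deriv[OF dxi, of s d] by (simp add: inner_add_left)
lemma dm: "s \<in> I \<Longrightarrow> ((\<lambda>s. mu s \<bullet> d) has_real_derivative (- G s * (xi s \<bullet> d) + T s * (v s \<bullet> d))) (at s)"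
  using inner_deriv[OF dmu, of s d] by (simp add: inner_add_left inner_diff_left)
lemma dvv: "s \<in> I \<Longrightarrow> ((\<lambda>s. v s \<bullet> d) has_real_derivative (- K s * (xi s \<bullet> d) - T s * (mu s \<bullet> d))) (at s)"
  using inner_deriv[OF dv, of s d] by (simp add: inner_diff_left)

lemma helixI:
  assumes "\<forall>s\<in>I. mu s \<bullet> D = c" "D \<noteq> 0"
  shows "mu_helix I mu"
  unfolding mu_helix_def
proof (intro exI conjI)
  show "norm ((1 / norm D) *\<^sub>R D) = 1" using assms(2) by simp
  show "\<forall>s\<in>I. mu s \<bullet> ((1 / norm D) *\<^sub>R D) = c / norm D" using assms(1) by simp
qed


lemma deriv_eq:
  fixes f g :: "real \<Rightarrow> real"
  assumes "s \<in> I" "\<forall>t\<in>I. f t = g t" "(f has_real_derivative a) (at s)" "(g has_real_derivative b) (at s)"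
  shows "a = b"
proof -
  have "(g has_real_derivative a) (at s)"
    using has_field_derivative_transform_within_open[OF assms(3) Iopen assms(1)] assms(2) by auto
  then show ?thesis using assms(4) DERIV_unique by blast
qed

lemma caseG:
  assumes G0: "\<forall>s\<in>I. G s = 0"
  shows "mu_helix I mu \<longleftrightarrow> const_on I (\<lambda>s. K s / T s)"
proof
  assume "mu_helix I mu"
  then obtain d c where d1: "norm d = 1" and mc: "\<forall>s\<in>I. mu s \<bullet> d = c"
    unfolding mu_helix_def by blast
  have T0: "T s \<noteq> 0" if "s \<in> I" for s using GT[OF that] G0 that by auto
  have y0: "v s \<bullet> d = 0" if "s \<in> I" for s
  proof -
    have "- G s * (xi s \<bullet> d) + T s * (v s \<bullet> d) = 0"
      using deriv_const_zero[OF Iopen that mc dm[OF that, of d]] by simp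
    then show ?thesis using G0 that T0[OF that] by simp
  qed
  have xc: "\<exists>a. \<forall>s\<in>I. xi s \<bullet> d = a"
    by (rule const_real[OF Iint Iopen]) (use dx[of _ d] y0 G0 in \<open>auto simp: inner_commute\<close>)
  then obtain a where xa: "\<forall>s\<in>I. xi s \<bullet> d = a" by blast
  have rel: "- K s * a - T s * c = 0" if "s \<in> I" for s
  proof -
    have "\<forall>t\<in>I. v t \<bullet> d = 0" using y0 by blast
    from deriv_const_zero[OF Iopen that this dvv[OF that, of d]] show ?thesis using xa mc that by simp
  qed
  obtain s0 where s0: "s0 \<in> I" using Ine by blast
  have "a \<noteq> 0"
  proof
    assume "a = 0"
    then have "c = 0" using rel[OF s0] T0[OF s0] by simp
    then show False using pars[OF s0, of d] xa mc y0 s0 d1 \<open>a = 0\<close> by (simp add: inner_commute)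
  qed
  show "const_on I (\<lambda>s. K s / T s)"
    unfolding const_on_def
  proof (intro exI ballI)
    fix s assume "s \<in> I"
    show "K s / T s = - c / a" using rel[OF \<open>s \<in> I\<close>] T0[OF \<open>s \<in> I\<close>] \<open>a \<noteq> 0\<close>
      by (simp add: field_simps)
  qed
next
  assume "const_on I (\<lambda>s. K s / T s)"
  then obtain l where l: "\<forall>s\<in>I. K s / T s = l" unfolding const_on_def by blast
  have T0: "T s \<noteq> 0" if "s \<in> I" for s using GT[OF that] G0 that by auto
  have "\<exists>D. \<forall>s\<in>I. xi s - l *\<^sub>R mu s = D"
  proof (rule const_vec[OF Iint Iopen])
    fix s assume s: "s \<in> I"
    have K: "K s = l * T s" using l s T0[OF s] by (auto simp: field_simps)
    show "((\<lambda>s. xi s - l *\<^sub>R mu s) has_vector_derivative 0) (at s)"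
      using has_vector_derivative_diff[OF dxi[OF s] has_vector_derivative_scaleR[OF DERIV_const dmu[OF s], of l]]
      using G0 s K by (simp add: algebra_simps)
  qed
  then obtain D where D: "\<forall>s\<in>I. xi s - l *\<^sub>R mu s = D" by blast
  obtain s0 where s0: "s0 \<in> I" using Ine by blast
  have "xi s0 \<bullet> D = 1" using D s0 ip[OF s0] by (auto simp: inner_diff_right)
  then have "D \<noteq> 0" by auto
  moreover have "\<forall>s\<in>I. mu s \<bullet> D = - l" using D ip by (auto simp: inner_diff_right)
  ultimately show "mu_helix I mu" by (rule helixI[rotated])
qed

lemma caseT:
  assumes T0': "\<forall>s\<in>I. T s = 0"
  shows "mu_helix I mu \<longleftrightarrow> const_on I (\<lambda>s. K s / G s)"
proof
  assume "mu_helix I mu"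
  then obtain d c where d1: "norm d = 1" and mc: "\<forall>s\<in>I. mu s \<bullet> d = c"
    unfolding mu_helix_def by blast
  have G0: "G s \<noteq> 0" if "s \<in> I" for s using GT[OF that] T0' that by auto
  have x0: "xi s \<bullet> d = 0" if "s \<in> I" for s
  proof -
    have "- G s * (xi s \<bullet> d) + T s * (v s \<bullet> d) = 0"
      using deriv_const_zero[OF Iopen that mc dm[OF that, of d]] by simp
    then show ?thesis using T0' that G0[OF that] by simp
  qed
  have yc: "\<exists>b. \<forall>s\<in>I. v s \<bullet> d = b"
    by (rule const_real[OF Iint Iopen]) (use dvv[of _ d] x0 T0' in \<open>auto simp: inner_commute\<close>)
  then obtain b where yb: "\<forall>s\<in>I. v s \<bullet> d = b" by blast
  have rel: "G s * c + K s * b = 0" if "s \<in> I" for s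
    using deriv_eq[OF that, of "\<lambda>s. xi s \<bullet> d" "\<lambda>_. 0"] x0 dx[OF that, of d] yb mc that by auto
  obtain s0 where s0: "s0 \<in> I" using Ine by blast
  have "b \<noteq> 0"
  proof
    assume "b = 0"
    then have "c = 0" using rel[OF s0] G0[OF s0] by simp
    then show False using pars[OF s0, of d] yb mc x0 s0 d1 \<open>b = 0\<close> by (simp add: inner_commute)
  qed
  show "const_on I (\<lambda>s. K s / G s)"
    unfolding const_on_def
  proof (intro exI ballI)
    fix s assume "s \<in> I"
    show "K s / G s = - c / b" using rel[OF \<open>s \<in> I\<close>] G0[OF \<open>s \<in> I\<close>] \<open>b \<noteq> 0\<close>
      by (simp add: field_simps)
  qed
next
  assume "const_on I (\<lambda>s. K s / G s)"
  then obtain l where l: "\<forall>s\<in>I. K s / G s = l" unfolding const_on_def by blast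
  have G0: "G s \<noteq> 0" if "s \<in> I" for s using GT[OF that] T0' that by auto
  have "\<exists>D. \<forall>s\<in>I. l *\<^sub>R mu s - v s = D"
  proof (rule const_vec[OF Iint Iopen])
    fix s assume s: "s \<in> I"
    have K: "K s = l * G s" using l s G0[OF s] by (auto simp: field_simps)
    show "((\<lambda>s. l *\<^sub>R mu s - v s) has_vector_derivative 0) (at s)"
      using has_vector_derivative_diff[OF has_vector_derivative_scaleR[OF DERIV_const dmu[OF s], of l] dv[OF s]]
      using T0' s K by (simp add: algebra_simps)
  qed
  then obtain D where D: "\<forall>s\<in>I. l *\<^sub>R mu s - v s = D" by blast
  obtain s0 where s0: "s0 \<in> I" using Ine by blast
  have "v s0 \<bullet> D = -1" using D s0 ip[OF s0] by (auto simp: inner_diff_right)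
  then have "D \<noteq> 0" by auto
  moreover have "\<forall>s\<in>I. mu s \<bullet> D = l" using D ip by (auto simp: inner_diff_right)
  ultimately show "mu_helix I mu" by (rule helixI[rotated])
qed

end

context frame begin

definition rho where "rho s = sqrt (G s ^ 2 + T s ^ 2)"
definition SS where "SS s = (deriv T s * G s - T s * deriv G s) / rho s ^ 3"

lemma rho_pos: "s \<in> I \<Longrightarrow> rho s > 0"
  using GT[of s] unfolding rho_def by (auto simp: add_pos_nonneg add_nonneg_pos)

lemma rho_sq: "rho s ^ 2 = G s ^ 2 + T s ^ 2"
  unfolding rho_def by simp

lemma drho: "s \<in> I \<Longrightarrow> (rho has_real_derivative ((G s * deriv G s + T s * deriv T s) / rho s)) (at s)"
proof -
  assume s: "s \<in> I"
  have q: "((\<lambda>s. G s ^ 2 + T s ^ 2) has_real_derivative (2 * G s * deriv G s + 2 * T s * deriv T s)) (at s)"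
    by (auto intro!: derivative_eq_intros dG[OF s] dT[OF s])
  have pos: "G s ^ 2 + T s ^ 2 > 0" using rho_pos[OF s] rho_sq[of s] by (metis zero_less_power)
  have "(rho has_real_derivative (inverse (sqrt (G s ^ 2 + T s ^ 2)) / 2 * (2 * G s * deriv G s + 2 * T s * deriv T s))) (at s)"
    unfolding rho_def[abs_def] by (rule DERIV_chain2[OF DERIV_real_sqrt[OF pos] q])
  moreover have "inverse (sqrt (G s ^ 2 + T s ^ 2)) / 2 * (2 * G s * deriv G s + 2 * T s * deriv T s)
     = (G s * deriv G s + T s * deriv T s) / rho s"
    using rho_pos[OF s] unfolding rho_def[symmetric] by (simp add: divide_simps) 
  ultimately show ?thesis by (simp only:)
qed

lemma target_eq: "s \<in> I \<Longrightarrow> - (deriv T s * G s - T s * deriv G s) / (G s ^ 2 + T s ^ 2) powr (3/2) = - SS s"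
proof -
  assume s: "s \<in> I"
  have pos: "G s ^ 2 + T s ^ 2 > 0" using rho_pos[OF s] rho_sq[of s] by (metis zero_less_power)
  have "(G s ^ 2 + T s ^ 2) powr (3/2) = rho s ^ 3" by (simp add: rho_def powr32[OF pos])
  then show ?thesis unfolding SS_def by (simp only: minus_divide_left)
qed


lemma caseK_fwd:
  assumes K0: "\<forall>s\<in>I. K s = 0" and H: "mu_helix I mu"
  shows "\<exists>k. \<forall>s\<in>I. SS s = k"
proof -
  obtain d c where d1: "norm d = 1" and mc: "\<forall>s\<in>I. mu s \<bullet> d = c"
    using H unfolding mu_helix_def by blast
  define x where "x s = xi s \<bullet> d" for s
  define y where "y s = v s \<bullet> d" for s
  define u where "u s = T s * x s + G s * y s" for s
  define N where "N s = G s * deriv G s + T s * deriv T s" for s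
  have hrel: "G s * x s = T s * y s" if s: "s \<in> I" for s
    using deriv_const_zero[OF Iopen s mc dm[OF s, of d]] unfolding x_def y_def
    by (simp add: inner_commute)
  have dxK: "(x has_real_derivative G s * c) (at s)" if s: "s \<in> I" for s
    using dx[OF s, of d] K0 mc s unfolding x_def[abs_def] by simp
  have dyK: "(y has_real_derivative - T s * c) (at s)" if s: "s \<in> I" for s
    using dvv[OF s, of d] K0 mc s unfolding y_def[abs_def] by simp
  have hx: "x s * rho s ^ 2 = T s * u s" if s: "s \<in> I" for s
  proof -
    have "x s * (G s ^ 2 + T s ^ 2) - T s * u s = G s * (G s * x s - T s * y s)"
      unfolding u_def by (simp add: algebra_simps power2_eq_square)
    then show ?thesis using hrel[OF s] rho_sq[of s] by simp
  qed
  have hy: "y s * rho s ^ 2 = G s * u s" if s: "s \<in> I" for s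
  proof -
    have "y s * (G s ^ 2 + T s ^ 2) - G s * u s = T s * (T s * y s - G s * x s)"
      unfolding u_def by (simp add: algebra_simps power2_eq_square)
    then show ?thesis using hrel[OF s] rho_sq[of s] by simp
  qed
  have dal: "((\<lambda>s. u s / rho s) has_real_derivative 0) (at s)" if s: "s \<in> I" for s
  proof -
    define Du where "Du = deriv T s * x s + G s * c * T s + (deriv G s * y s + - T s * c * G s)"
    have du: "(u has_real_derivative Du) (at s)"
      unfolding u_def[abs_def] Du_def
      by (intro DERIV_add DERIV_mult dT[OF s] dG[OF s] dxK[OF s] dyK[OF s])
    have "((\<lambda>s. u s / rho s) has_real_derivative (Du * rho s - u s * (N s / rho s)) / (rho s * rho s)) (at s)"
      using DERIV_divide[OF du drho[OF s]] rho_pos[OF s] unfolding N_def by simp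
    moreover have "Du * rho s ^ 2 = u s * N s"
    proof -
      have "Du * rho s ^ 2 = deriv T s * (x s * rho s ^ 2) + deriv G s * (y s * rho s ^ 2)"
        unfolding Du_def by (simp add: algebra_simps)
      also have "\<dots> = u s * N s" using hx[OF s] hy[OF s] unfolding N_def by (simp add: algebra_simps)
      finally show ?thesis .
    qed
    then have "(Du * rho s - u s * (N s / rho s)) = 0"
      using rho_pos[OF s] by (simp add: field_simps power2_eq_square)
    ultimately show ?thesis by simp
  qed
  obtain a where al: "\<forall>s\<in>I. u s / rho s = a"
    using const_real[OF Iint Iopen dal] by blast
  have xa: "x s = a * T s / rho s" if s: "s \<in> I" for s
  proof -
    have "u s = a * rho s" using al s rho_pos[OF s] by (auto simp: field_simps)
    then have "x s * rho s ^ 2 = T s * a * rho s" using hx[OF s] by simp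
    then show ?thesis using rho_pos[OF s] by (simp add: field_simps power2_eq_square)
  qed
  have ya: "y s = a * G s / rho s" if s: "s \<in> I" for s
  proof -
    have "u s = a * rho s" using al s rho_pos[OF s] by (auto simp: field_simps)
    then have "y s * rho s ^ 2 = G s * a * rho s" using hy[OF s] by simp
    then show ?thesis using rho_pos[OF s] by (simp add: field_simps power2_eq_square)
  qed
  have cS: "c = a * SS s" if s: "s \<in> I" for s
  proof -
    have r: "rho s > 0" using rho_pos[OF s] .
    have d1': "((\<lambda>s. a * T s / rho s) has_real_derivative
        a * ((deriv T s * rho s - T s * (N s / rho s)) / (rho s * rho s))) (at s)"
      using DERIV_cmult[OF DERIV_divide[OF dT[OF s] drho[OF s]], of a] r unfolding N_def
      by (simp add: times_divide_eq_right)
    have d2': "((\<lambda>s. a * G s / rho s) has_real_derivative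
        a * ((deriv G s * rho s - G s * (N s / rho s)) / (rho s * rho s))) (at s)"
      using DERIV_cmult[OF DERIV_divide[OF dG[OF s] drho[OF s]], of a] r unfolding N_def
      by (simp add: times_divide_eq_right)
    have e1: "G s * c = a * ((deriv T s * rho s - T s * (N s / rho s)) / (rho s * rho s))"
      by (rule deriv_eq[OF s _ dxK[OF s] d1']) (use xa in auto)
    have e2: "- T s * c = a * ((deriv G s * rho s - G s * (N s / rho s)) / (rho s * rho s))"
      by (rule deriv_eq[OF s _ dyK[OF s] d2']) (use ya in auto)
    have f1: "(deriv T s * rho s - T s * (N s / rho s)) / (rho s * rho s) = G s * SS s"
      unfolding SS_def N_def using r rho_sq[of s]
      by (simp add: field_simps power2_eq_square power3_eq_cube)
    have f2: "(deriv G s * rho s - G s * (N s / rho s)) / (rho s * rho s) = - T s * SS s"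
      unfolding SS_def N_def using r rho_sq[of s]
      by (simp add: field_simps power2_eq_square power3_eq_cube)
    have "G s * c = G s * (a * SS s)" "T s * c = T s * (a * SS s)"
      using e1[unfolded f1] e2[unfolded f2] by (simp_all add: algebra_simps)
    then show ?thesis using GT[OF s] by auto
  qed
  obtain s0 where s0: "s0 \<in> I" using Ine by blast
  have "a \<noteq> 0"
  proof
    assume "a = 0"
    then have "c = 0" "x s0 = 0" "y s0 = 0" using cS[OF s0] xa[OF s0] ya[OF s0] by auto
    then show False using pars[OF s0, of d] mc s0 d1 unfolding x_def y_def by (simp add: inner_commute)
  qed
  then show ?thesis using cS by (intro exI[of _ "c / a"]) (auto simp: field_simps)
qed


lemma caseK_bwd:
  assumes K0: "\<forall>s\<in>I. K s = 0" and S0: "\<forall>s\<in>I. SS s = k"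
  shows "mu_helix I mu"
proof -
  define W where "W s = T s *\<^sub>R xi s + G s *\<^sub>R v s" for s
  define N where "N s = G s * deriv G s + T s * deriv T s" for s
  have "\<exists>D. \<forall>s\<in>I. k *\<^sub>R mu s + (1 / rho s) *\<^sub>R W s = D"
  proof (rule const_vec[OF Iint Iopen])
    fix s assume s: "s \<in> I"
    have r: "rho s > 0" using rho_pos[OF s] .
    have dW: "(W has_vector_derivative (deriv T s *\<^sub>R xi s + deriv G s *\<^sub>R v s)) (at s)"
    proof -
      have "(W has_vector_derivative
          (T s *\<^sub>R (G s *\<^sub>R mu s + K s *\<^sub>R v s) + deriv T s *\<^sub>R xi s +
          (G s *\<^sub>R (- K s *\<^sub>R xi s - T s *\<^sub>R mu s) + deriv G s *\<^sub>R v s))) (at s)"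
        unfolding W_def[abs_def]
        by (intro has_vector_derivative_add has_vector_derivative_scaleR dT[OF s] dG[OF s] dxi[OF s] dv[OF s])
      moreover have "T s *\<^sub>R (G s *\<^sub>R mu s + K s *\<^sub>R v s) + deriv T s *\<^sub>R xi s +
          (G s *\<^sub>R (- K s *\<^sub>R xi s - T s *\<^sub>R mu s) + deriv G s *\<^sub>R v s)
          = deriv T s *\<^sub>R xi s + deriv G s *\<^sub>R v s"
        using K0 s by (simp add: algebra_simps)
      ultimately show ?thesis by (simp only:)
    qed
    have dinv: "((\<lambda>s. 1 / rho s) has_real_derivative (0 * rho s - 1 * (N s / rho s)) / (rho s * rho s)) (at s)"
      using DERIV_divide[OF DERIV_const[where k=1] drho[OF s]] r unfolding N_def by simp
    have dD: "((\<lambda>s. k *\<^sub>R mu s + (1 / rho s) *\<^sub>R W s) has_vector_derivative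
       (k *\<^sub>R (- G s *\<^sub>R xi s + T s *\<^sub>R v s) + ((1 / rho s) *\<^sub>R (deriv T s *\<^sub>R xi s + deriv G s *\<^sub>R v s)
         + ((0 * rho s - 1 * (N s / rho s)) / (rho s * rho s)) *\<^sub>R W s))) (at s)"
      using has_vector_derivative_add[OF has_vector_derivative_scaleR[OF DERIV_const dmu[OF s], of k]
          has_vector_derivative_scaleR[OF dinv dW]] by simp
    define q where "q = (0 * rho s - 1 * (N s / rho s)) / (rho s * rho s)"
    have cx: "- k * G s + deriv T s / rho s + q * T s = 0"
    proof -
      have a1: "deriv T s / rho s + q * T s = (deriv T s * (rho s * rho s) - N s * T s) / rho s ^ 3"
        unfolding q_def using r by (simp add: field_simps power3_eq_cube)
      have a2: "deriv T s * (rho s * rho s) - N s * T s = G s * (deriv T s * G s - T s * deriv G s)"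
        using rho_sq[of s] unfolding N_def by (simp add: power2_eq_square algebra_simps)
      have "deriv T s / rho s + q * T s = G s * SS s"
        unfolding a1 a2 SS_def by simp
      then show ?thesis using S0 s by (simp add: algebra_simps)
    qed
    have cv: "k * T s + deriv G s / rho s + q * G s = 0"
    proof -
      have a1: "deriv G s / rho s + q * G s = (deriv G s * (rho s * rho s) - N s * G s) / rho s ^ 3"
        unfolding q_def using r by (simp add: field_simps power3_eq_cube)
      have a2: "deriv G s * (rho s * rho s) - N s * G s = - T s * (deriv T s * G s - T s * deriv G s)"
        using rho_sq[of s] unfolding N_def by (simp add: power2_eq_square algebra_simps)
      have "deriv G s / rho s + q * G s = - T s * SS s"
        unfolding a1 a2 SS_def by simp
      then show ?thesis using S0 s by (simp add: algebra_simps)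
    qed
    have "k *\<^sub>R (- G s *\<^sub>R xi s + T s *\<^sub>R v s) + ((1 / rho s) *\<^sub>R (deriv T s *\<^sub>R xi s + deriv G s *\<^sub>R v s)
         + q *\<^sub>R W s) = (- k * G s + deriv T s / rho s + q * T s) *\<^sub>R xi s
           + (k * T s + deriv G s / rho s + q * G s) *\<^sub>R v s"
      unfolding W_def by (simp add: algebra_simps)
    also have "\<dots> = 0" using cx cv by simp
    finally show "((\<lambda>s. k *\<^sub>R mu s + (1 / rho s) *\<^sub>R W s) has_vector_derivative 0) (at s)"
      using dD unfolding q_def by simp
  qed
  then obtain D where D: "\<forall>s\<in>I. k *\<^sub>R mu s + (1 / rho s) *\<^sub>R W s = D" by blast
  obtain s0 where s0: "s0 \<in> I" using Ine by blast
  have "xi s0 \<bullet> D = T s0 / rho s0" "v s0 \<bullet> D = G s0 / rho s0"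
    using D s0 ip[OF s0] unfolding W_def by (auto simp: inner_add_right)
  then have "D \<noteq> 0" using GT[OF s0] rho_pos[OF s0] by auto
  moreover have "\<forall>s\<in>I. mu s \<bullet> D = k" using D ip unfolding W_def by (auto simp: inner_add_right)
  ultimately show "mu_helix I mu" by (rule helixI[rotated])
qed

end

theorem corollary19:
  assumes M: "myller_config I C xi mu v G K T"
    and GT: "\<forall>s\<in>I. (G s, T s) \<noteq> (0, 0)"
  shows "((\<forall>s\<in>I. K s = 0) \<longrightarrow>
            (mu_helix I mu \<longleftrightarrow>
             const_on I (\<lambda>s. - (deriv T s * G s - T s * deriv G s) / (G s ^ 2 + T s ^ 2) powr (3/2))))
       \<and> ((\<forall>s\<in>I. G s = 0) \<longrightarrow> (mu_helix I mu \<longleftrightarrow> const_on I (\<lambda>s. K s / T s)))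
       \<and> ((\<forall>s\<in>I. T s = 0) \<longrightarrow> (mu_helix I mu \<longleftrightarrow> const_on I (\<lambda>s. K s / G s)))"
proof -
  have diff: "(f has_real_derivative deriv f s) (at s)" if "smooth_on I f" "s \<in> I" for f :: "real \<Rightarrow> real" and s
  proof -
    have "iter_vderiv 0 f differentiable (at s)" using that unfolding smooth_on_def by blast
    then have "f differentiable (at s)" by (simp add: iter_vderiv_def)
    then show ?thesis by (simp add: DERIV_deriv_iff_real_differentiable)
  qed
  interpret F: frame I xi mu v G K T
    using M GT diff unfolding myller_config_def by unfold_locales auto
  show ?thesis
  proof (intro conjI impI)
    assume K0: "\<forall>s\<in>I. K s = 0"
    have eq: "const_on I (\<lambda>s. - (deriv T s * G s - T s * deriv G s) / (G s ^ 2 + T s ^ 2) powr (3/2))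
        \<longleftrightarrow> (\<exists>k. \<forall>s\<in>I. F.SS s = k)"
    proof
      assume "const_on I (\<lambda>s. - (deriv T s * G s - T s * deriv G s) / (G s ^ 2 + T s ^ 2) powr (3/2))"
      then obtain l where "\<forall>s\<in>I. - (deriv T s * G s - T s * deriv G s) / (G s ^ 2 + T s ^ 2) powr (3/2) = l"
        unfolding const_on_def by blast
      then have "\<forall>s\<in>I. F.SS s = - l" using F.target_eq by force
      then show "\<exists>k. \<forall>s\<in>I. F.SS s = k" by blast
    next
      assume "\<exists>k. \<forall>s\<in>I. F.SS s = k"
      then obtain k where "\<forall>s\<in>I. F.SS s = k" by blast
      then show "const_on I (\<lambda>s. - (deriv T s * G s - T s * deriv G s) / (G s ^ 2 + T s ^ 2) powr (3/2))"
        unfolding const_on_def using F.target_eq by (intro exI[of _ "- k"]) auto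
    qed
    show "mu_helix I mu \<longleftrightarrow>
             const_on I (\<lambda>s. - (deriv T s * G s - T s * deriv G s) / (G s ^ 2 + T s ^ 2) powr (3/2))"
      unfolding eq using F.caseK_fwd[OF K0] F.caseK_bwd[OF K0] by blast
  next
    assume "\<forall>s\<in>I. G s = 0"
    then show "mu_helix I mu \<longleftrightarrow> const_on I (\<lambda>s. K s / T s)" by (rule F.caseG)
  next
    assume "\<forall>s\<in>I. T s = 0"
    then show "mu_helix I mu \<longleftrightarrow> const_on I (\<lambda>s. K s / G s)" by (rule F.caseT)
  qed
qed

end
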